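(* Fix any values of the utility parameters ($\beta$, $\alpha$, $\pi$) and of the discount factor $\delta\in(0,1)$. If the adversary is not restricted by timely punishments, then no protocol enforces accountability.
   Context: Model. There are $n$ agents $\mathcal N=\{1,\dots,n\}$ in a synchronous system with rounds $m=1,2,\dots$. Evolving graphs. An evolving graph is a sequence $G=(G^m)_{m\ge1}$ of undirected graphs on $\mathcal N$. Before execution an oblivious adversary fixes some $G\in\mathcal G^*$, where the set $\mathcal G^*$ of possible evolving graphs is common knowledge. At round $m$, before acting, agent $i$ learns a set $\mathcal G_i^m$ of graphs containing $G^m$; this at least determines $i$'s round-$m$ neighbours. Actions. In each round, every pair of neighbours $i,j$ simultaneously chooses an individual action toward each other: - defect: omit messages; - cooperate: send its value plus monitoring information; - punish: send messages while causing a utility loss to the other. Each learns the other's individual action only at the end of the round. A round-$m$ action of $i$ lists its individual actions toward all of its round-$m$ neighbours. A history is the sequence of past action profiles together with $G$. An information set $I_i$ of $i$ is the set of histories consistent with $i$'s observations, which are: the sets $\mathcal G_i^{m'}$, $i$'s own past actions, and the individual actions of neighbours toward $i$. Agents have perfect recall. $\mathcal I_i(G)$ denotes $i$'s information sets compatible with $G$. A strategy $\sigma_i$ maps each information set to a distribution over actions; a protocol is a strategy profile $\vec\sigma$. Utility. In each round, for each neighbour $j$, agent $i$ gets: - benefit $\beta$ if $j$ cooperates or punishes (and $i$ does not avoid a punishment); - cost $1$ if $i$ cooperates or punishes; - cost $\alpha\ge0$ for receiving $j$'s messages; - loss $\pi$ if $j$ punishes $i$. Utilities are discounted by $\delta\in(0,1)$.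 We write $u_i(\vec\sigma\mid G,h)$ for the expected sum over rounds $m'\ge m$ of $\delta^{m'-m}$ times the round-$m'$ utility, given a round-$m$ history $h$. Then $u_i(\vec\sigma\mid G,I_i)=\sum_{h\in I_i}\mu(h\mid G,I_i)\,u_i(\vec\sigma\mid G,h)$ for a belief system $\mu$. Consistent beliefs. A belief system $\mu$ is consistent with $\vec\sigma$ and $\mathcal G^*$ if there are completely mixed protocols $\vec\sigma^c\to\vec\sigma$ such that for all $G\in\mathcal G^*$, $i$, $I_i$ and $h\in I_i$, $$\mu(h\mid G,I_i)=\lim_c \Pr^{\vec\sigma^c}(h\mid G)\Big/\sum_{h'\in I_i}\Pr^{\vec\sigma^c}(h'\mid G).$$ Equilibrium. $\vec\sigma^*$ is a $\mathcal G^*$-Oblivious Adversary Perfect Equilibrium ($\mathcal G^*$-OAPE) if some such consistent $\mu^*$ satisfies, for all $G\in\mathcal G^*$, agents $i$, strategies $\sigma_i$ and $I_i\in\mathcal I_i(G)$, $$u_i(\vec\sigma^*\mid G,I_i)\ge u_i((\sigma_i,\vec\sigma^*_{-i})\mid G,I_i).$$ A protocol enforces accountability if (1) agents always cooperate until some agent deviates, and (2) it is a $\mathcal G^*$-OAPE. Causal influence. An $i$-edge of $G$ is a pair $(j,m)$ with $\{i,j\}$ an edge of $G^m$. $(j,m)\leadsto^G(l,m')$ means: $m<m'$ and there is a chain $j=o_0,o_1,\dots,o_k=l$ ($k\ge0$) and rounds $m\le m_1<\dots<m_k<m'$ with $\{o_{t-1},o_t\}$ an edge of $G^{m_t}$.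 $(j,m)\leadsto_i^G(l,m')$ means the same with no intermediate agent $o_t$ ($0\le t<k$) equal to $i$. Punishment opportunities. A punishment opportunity (PO) of $i$ for $i$-edge $(j,m)$ in $G$ is an $i$-edge $(l,m')$ with $(j,m)\leadsto_i^G(l,m')$. The adversary is restricted by timely punishments if there is $\rho>0$ such that for every $G\in\mathcal G^*$, agent $i$ and $i$-edge $(j,m)$ of $G$ there is a PO $(l,m')$ of $i$ for $(j,m)$ with $m'<m+\rho$. *)

theory Defs
  imports "HOL-Probability.Probability"
begin

text \<open>Agents are the naturals below n; rounds are indexed from 0.
  A graph is a set of (directed copies of) edges; undirectedness is symmetry.\<close>

type_synonym graph = "(nat \<times> nat) set"
type_synonym egraph = "nat \<Rightarrow> graph"

datatype act = Defect | Cooperate | Punish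

text \<open>A round action of an agent i: individual action toward each neighbour j
  (Some a), None for non-neighbours.\<close>
type_synonym ract = "nat \<Rightarrow> act option"
text \<open>Action profile of a round: p i j = individual action of i toward j.\<close>
type_synonym profile = "nat \<Rightarrow> ract"
text \<open>A history: the evolving graph together with the past action profiles;
  a history with m profiles is a round-m history.\<close>
type_synonym history = "egraph \<times> profile list"
text \<open>Observations of an agent: graph information sets, own past actions,
  past individual actions of neighbours toward it.\<close>
type_synonym obs = "graph set list \<times> ract list \<times> ract list"
type_synonym strategy = "obs \<Rightarrow> ract pmf"
type_synonym protocol = "nat \<Rightarrow> strategy"
type_synonym beliefs = "egraph \<Rightarrow> nat \<Rightarrow> history set \<Rightarrow> history \<Rightarrow> real"

definition wf_graph :: "nat \<Rightarrow> graph \<Rightarrow> bool" where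
  "wf_graph n H \<longleftrightarrow> sym H \<and> irrefl H \<and> H \<subseteq> {..<n} \<times> {..<n}"

definition wf_egraphs :: "nat \<Rightarrow> egraph set \<Rightarrow> bool" where
  "wf_egraphs n Gs \<longleftrightarrow> (\<forall>G\<in>Gs. \<forall>m. wf_graph n (G m))"

text \<open>Ginfo G i m = the set of graphs \<G>_i^m learnt by i before acting in round m.\<close>
definition info_ok :: "nat \<Rightarrow> egraph set \<Rightarrow> (egraph \<Rightarrow> nat \<Rightarrow> nat \<Rightarrow> graph set) \<Rightarrow> bool" where
  "info_ok n Gs Ginfo \<longleftrightarrow> (\<forall>G\<in>Gs. \<forall>i<n. \<forall>m.
      G m \<in> Ginfo G i m \<and>
      (\<forall>H\<in>Ginfo G i m. wf_graph n H \<and> (\<forall>j. ((i,j) \<in> H) = ((i,j) \<in> G m))))"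

definition valid_ract :: "graph \<Rightarrow> nat \<Rightarrow> ract \<Rightarrow> bool" where
  "valid_ract H i a \<longleftrightarrow> (\<forall>j. (a j \<noteq> None) = ((i,j) \<in> H))"

definition valid_profile :: "graph \<Rightarrow> profile \<Rightarrow> bool" where
  "valid_profile H p \<longleftrightarrow> (\<forall>i. valid_ract H i (p i))"

definition valid_hist :: "egraph set \<Rightarrow> history \<Rightarrow> bool" where
  "valid_hist Gs h \<longleftrightarrow> fst h \<in> Gs \<and>
     (\<forall>k<length (snd h). valid_profile (fst h k) (snd h ! k))"

definition obs :: "(egraph \<Rightarrow> nat \<Rightarrow> nat \<Rightarrow> graph set) \<Rightarrow> nat \<Rightarrow> history \<Rightarrow> obs" where
  "obs Ginfo i h =
     (map (\<lambda>k. Ginfo (fst h) i k) [0..<Suc (length (snd h))],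
      map (\<lambda>p. p i) (snd h),
      map (\<lambda>p. \<lambda>j. p j i) (snd h))"

definition infoset :: "egraph set \<Rightarrow> (egraph \<Rightarrow> nat \<Rightarrow> nat \<Rightarrow> graph set) \<Rightarrow> nat \<Rightarrow> history \<Rightarrow> history set" where
  "infoset Gs Ginfo i h = {h'. valid_hist Gs h' \<and> obs Ginfo i h' = obs Ginfo i h}"

definition infosets_G :: "egraph set \<Rightarrow> (egraph \<Rightarrow> nat \<Rightarrow> nat \<Rightarrow> graph set) \<Rightarrow> nat \<Rightarrow> egraph \<Rightarrow> history set set" where
  "infosets_G Gs Ginfo i G = {infoset Gs Ginfo i h | h. valid_hist Gs h \<and> fst h = G}"

definition valid_strategy :: "egraph set \<Rightarrow> (egraph \<Rightarrow> nat \<Rightarrow> nat \<Rightarrow> graph set) \<Rightarrow> nat \<Rightarrow> strategy \<Rightarrow> bool" where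
  "valid_strategy Gs Ginfo i s \<longleftrightarrow> (\<forall>h. valid_hist Gs h \<longrightarrow>
     set_pmf (s (obs Ginfo i h)) \<subseteq> {a. valid_ract (fst h (length (snd h))) i a})"

definition completely_mixed_strategy :: "egraph set \<Rightarrow> (egraph \<Rightarrow> nat \<Rightarrow> nat \<Rightarrow> graph set) \<Rightarrow> nat \<Rightarrow> strategy \<Rightarrow> bool" where
  "completely_mixed_strategy Gs Ginfo i s \<longleftrightarrow> valid_strategy Gs Ginfo i s \<and>
     (\<forall>h. valid_hist Gs h \<longrightarrow> (\<forall>a. valid_ract (fst h (length (snd h))) i a \<longrightarrow>
        pmf (s (obs Ginfo i h)) a > 0))"

definition valid_protocol :: "nat \<Rightarrow> egraph set \<Rightarrow> (egraph \<Rightarrow> nat \<Rightarrow> nat \<Rightarrow> graph set) \<Rightarrow> protocol \<Rightarrow> bool" where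
  "valid_protocol n Gs Ginfo \<sigma> \<longleftrightarrow> (\<forall>i<n. valid_strategy Gs Ginfo i (\<sigma> i))"

definition completely_mixed :: "nat \<Rightarrow> egraph set \<Rightarrow> (egraph \<Rightarrow> nat \<Rightarrow> nat \<Rightarrow> graph set) \<Rightarrow> protocol \<Rightarrow> bool" where
  "completely_mixed n Gs Ginfo \<sigma> \<longleftrightarrow> (\<forall>i<n. completely_mixed_strategy Gs Ginfo i (\<sigma> i))"

text \<open>Distribution of the next action profile after history h: agents 0..n-1
  choose independently.\<close>
definition profile_pmf :: "nat \<Rightarrow> (egraph \<Rightarrow> nat \<Rightarrow> nat \<Rightarrow> graph set) \<Rightarrow> protocol \<Rightarrow> history \<Rightarrow> profile pmf" where
  "profile_pmf n Ginfo \<sigma> h =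
     fold (\<lambda>i P. bind_pmf P (\<lambda>p. map_pmf (\<lambda>a. p(i := a)) (\<sigma> i (obs Ginfo i h))))
          [0..<n] (return_pmf (\<lambda>_ _. None))"

definition extend :: "history \<Rightarrow> profile \<Rightarrow> history" where
  "extend h p = (fst h, snd h @ [p])"

fun run :: "nat \<Rightarrow> (egraph \<Rightarrow> nat \<Rightarrow> nat \<Rightarrow> graph set) \<Rightarrow> protocol \<Rightarrow> nat \<Rightarrow> history \<Rightarrow> history pmf" where
  "run n Ginfo \<sigma> 0 h = return_pmf h"
| "run n Ginfo \<sigma> (Suc k) h =
     bind_pmf (run n Ginfo \<sigma> k h) (\<lambda>h'. map_pmf (extend h') (profile_pmf n Ginfo \<sigma> h'))"

definition sends :: "act option \<Rightarrow> bool" where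
  "sends a \<longleftrightarrow> a = Some Cooperate \<or> a = Some Punish"

definition round_util :: "real \<Rightarrow> real \<Rightarrow> real \<Rightarrow> nat \<Rightarrow> egraph \<Rightarrow> nat \<Rightarrow> profile \<Rightarrow> real" where
  "round_util \<beta> \<alpha> \<pi> i G m p =
     (\<Sum>j\<in>{j. (i,j) \<in> G m}.
        (if sends (p j i) then \<beta> else 0)
      - (if sends (p i j) then 1 else 0)
      - (if sends (p j i) then \<alpha> else 0)
      - (if p j i = Some Punish then \<pi> else 0))"

definition util :: "nat \<Rightarrow> (egraph \<Rightarrow> nat \<Rightarrow> nat \<Rightarrow> graph set) \<Rightarrow> real \<Rightarrow> real \<Rightarrow> real \<Rightarrow> real \<Rightarrow>
                    protocol \<Rightarrow> nat \<Rightarrow> history \<Rightarrow> real" where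
  "util n Ginfo \<beta> \<alpha> \<pi> \<delta> \<sigma> i h =
     (\<Sum>k. \<delta> ^ k * measure_pmf.expectation (run n Ginfo \<sigma> (Suc k) h)
              (\<lambda>h'. round_util \<beta> \<alpha> \<pi> i (fst h') (length (snd h') - 1) (last (snd h'))))"

definition Pr :: "nat \<Rightarrow> (egraph \<Rightarrow> nat \<Rightarrow> nat \<Rightarrow> graph set) \<Rightarrow> protocol \<Rightarrow> egraph \<Rightarrow> history \<Rightarrow> real" where
  "Pr n Ginfo \<sigma> G h = pmf (run n Ginfo \<sigma> (length (snd h)) (G, [])) h"

definition consistent :: "nat \<Rightarrow> egraph set \<Rightarrow> (egraph \<Rightarrow> nat \<Rightarrow> nat \<Rightarrow> graph set) \<Rightarrow> protocol \<Rightarrow> beliefs \<Rightarrow> bool" where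
  "consistent n Gs Ginfo \<sigma> \<mu> \<longleftrightarrow>
    (\<exists>\<sigma>c :: nat \<Rightarrow> protocol.
       (\<forall>c. completely_mixed n Gs Ginfo (\<sigma>c c)) \<and>
       (\<forall>i<n. \<forall>h. valid_hist Gs h \<longrightarrow> (\<forall>a.
          (\<lambda>c. pmf (\<sigma>c c i (obs Ginfo i h)) a) \<longlonglongrightarrow> pmf (\<sigma> i (obs Ginfo i h)) a)) \<and>
       (\<forall>G\<in>Gs. \<forall>i<n. \<forall>I\<in>infosets_G Gs Ginfo i G. \<forall>h\<in>I.
          (\<lambda>c. Pr n Ginfo (\<sigma>c c) G h / infsum (Pr n Ginfo (\<sigma>c c) G) I) \<longlonglongrightarrow> \<mu> G i I h))"

definition util_I :: "nat \<Rightarrow> (egraph \<Rightarrow> nat \<Rightarrow> nat \<Rightarrow> graph set) \<Rightarrow> real \<Rightarrow> real \<Rightarrow> real \<Rightarrow> real \<Rightarrow>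
                      beliefs \<Rightarrow> protocol \<Rightarrow> egraph \<Rightarrow> nat \<Rightarrow> history set \<Rightarrow> real" where
  "util_I n Ginfo \<beta> \<alpha> \<pi> \<delta> \<mu> \<sigma> G i I =
     infsum (\<lambda>h. \<mu> G i I h * util n Ginfo \<beta> \<alpha> \<pi> \<delta> \<sigma> i h) I"

definition OAPE :: "nat \<Rightarrow> egraph set \<Rightarrow> (egraph \<Rightarrow> nat \<Rightarrow> nat \<Rightarrow> graph set) \<Rightarrow> real \<Rightarrow> real \<Rightarrow> real \<Rightarrow> real \<Rightarrow> protocol \<Rightarrow> bool" where
  "OAPE n Gs Ginfo \<beta> \<alpha> \<pi> \<delta> \<sigma> \<longleftrightarrow> valid_protocol n Gs Ginfo \<sigma> \<and>
     (\<exists>\<mu>. consistent n Gs Ginfo \<sigma> \<mu> \<and>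
        (\<forall>G\<in>Gs. \<forall>i<n. \<forall>s. valid_strategy Gs Ginfo i s \<longrightarrow>
           (\<forall>I\<in>infosets_G Gs Ginfo i G.
              util_I n Ginfo \<beta> \<alpha> \<pi> \<delta> \<mu> \<sigma> G i I \<ge> util_I n Ginfo \<beta> \<alpha> \<pi> \<delta> \<mu> (\<sigma>(i := s)) G i I)))"

definition coop_action :: "egraph \<Rightarrow> nat \<Rightarrow> nat \<Rightarrow> ract" where
  "coop_action G m i = (\<lambda>j. if (i,j) \<in> G m then Some Cooperate else None)"

definition all_coop :: "history \<Rightarrow> bool" where
  "all_coop h \<longleftrightarrow> (\<forall>k<length (snd h). \<forall>i j. (snd h ! k) i j = None \<or> (snd h ! k) i j = Some Cooperate)"

definition enforces_accountability :: "nat \<Rightarrow> egraph set \<Rightarrow> (egraph \<Rightarrow> nat \<Rightarrow> nat \<Rightarrow> graph set) \<Rightarrow> real \<Rightarrow> real \<Rightarrow> real \<Rightarrow> real \<Rightarrow> protocol \<Rightarrow> bool" where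
  "enforces_accountability n Gs Ginfo \<beta> \<alpha> \<pi> \<delta> \<sigma> \<longleftrightarrow>
     (\<forall>h. valid_hist Gs h \<and> all_coop h \<longrightarrow>
        (\<forall>i<n. \<sigma> i (obs Ginfo i h) = return_pmf (coop_action (fst h) (length (snd h)) i))) \<and>
     OAPE n Gs Ginfo \<beta> \<alpha> \<pi> \<delta> \<sigma>"

definition influences_avoiding :: "egraph \<Rightarrow> nat \<Rightarrow> nat \<times> nat \<Rightarrow> nat \<times> nat \<Rightarrow> bool" where
  "influences_avoiding G i jm lm' \<longleftrightarrow> (case jm of (j, m) \<Rightarrow> case lm' of (l, m') \<Rightarrow>
     m < m' \<and>
     (\<exists>k (ch::nat \<Rightarrow> nat) (r::nat \<Rightarrow> nat).
        ch 0 = j \<and> ch k = l \<and>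
        (\<forall>t\<in>{1..k}. (ch (t - 1), ch t) \<in> G (r t)) \<and>
        (\<forall>t\<in>{1..k}. m \<le> r t \<and> r t < m') \<and>
        (\<forall>t\<in>{1..<k}. r t < r (Suc t)) \<and>
        (\<forall>t<k. ch t \<noteq> i)))"

definition i_edge :: "egraph \<Rightarrow> nat \<Rightarrow> nat \<times> nat \<Rightarrow> bool" where
  "i_edge G i jm \<longleftrightarrow> (i, fst jm) \<in> G (snd jm)"

definition punishment_opportunity :: "egraph \<Rightarrow> nat \<Rightarrow> nat \<times> nat \<Rightarrow> nat \<times> nat \<Rightarrow> bool" where
  "punishment_opportunity G i jm lm' \<longleftrightarrow> i_edge G i lm' \<and> influences_avoiding G i jm lm'"

definition timely_punishments :: "nat \<Rightarrow> egraph set \<Rightarrow> bool" where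
  "timely_punishments n Gs \<longleftrightarrow> (\<exists>\<rho>::nat. \<rho> > 0 \<and>
     (\<forall>G\<in>Gs. \<forall>i<n. \<forall>j m. i_edge G i (j, m) \<longrightarrow>
        (\<exists>l m'. punishment_opportunity G i (j, m) (l, m') \<and> m' < m + \<rho>)))"

end

theory Submission
  imports Defs
begin


lemma fold_upd_eq:
  "fold (\<lambda>l p. p(l := q l)) xs p0 = (\<lambda>l. if l \<in> set xs then q l else p0 l)"
  by (induction xs arbitrary: p0) (auto simp: fun_eq_iff)

lemma fold_profile_support:
  assumes "p \<in> set_pmf (fold (\<lambda>i P. bind_pmf P (\<lambda>p. map_pmf (\<lambda>a. p(i := a)) (\<sigma> i (obs Ginfo i h)))) xs P0)"
  shows "\<exists>p0\<in>set_pmf P0. (\<forall>l\<in>set xs. p l \<in> set_pmf (\<sigma> l (obs Ginfo l h))) \<and> (\<forall>l. l \<notin> set xs \<longrightarrow> p l = p0 l)"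
  using assms
proof (induction xs arbitrary: P0)
  case Nil
  then show ?case by auto
next
  case (Cons x xs)
  from Cons.prems have "p \<in> set_pmf (fold (\<lambda>i P. bind_pmf P (\<lambda>p. map_pmf (\<lambda>a. p(i := a)) (\<sigma> i (obs Ginfo i h)))) xs
     (bind_pmf P0 (\<lambda>p. map_pmf (\<lambda>a. p(x := a)) (\<sigma> x (obs Ginfo x h)))))" by (simp only: fold_Cons comp_apply)
  from Cons.IH[OF this] obtain p1 where p1: "p1 \<in> set_pmf (bind_pmf P0 (\<lambda>p. map_pmf (\<lambda>a. p(x := a)) (\<sigma> x (obs Ginfo x h))))"
    "\<forall>l\<in>set xs. p l \<in> set_pmf (\<sigma> l (obs Ginfo l h))" "\<forall>l. l \<notin> set xs \<longrightarrow> p l = p1 l" by blast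
  from p1(1) obtain q a where q: "q \<in> set_pmf P0" "a \<in> set_pmf (\<sigma> x (obs Ginfo x h))" "p1 = q(x := a)" by auto
  show ?case using p1 q by (intro bexI[of _ q]) auto
qed

lemma fold_profile_return:
  assumes "\<forall>l\<in>set xs. \<sigma> l (obs Ginfo l h) = return_pmf (q l)"
  shows "fold (\<lambda>i P. bind_pmf P (\<lambda>p. map_pmf (\<lambda>a. p(i := a)) (\<sigma> i (obs Ginfo i h)))) xs (return_pmf p0)
       = return_pmf (fold (\<lambda>l p. p(l := q l)) xs p0)"
  using assms
proof (induction xs arbitrary: p0)
  case (Cons x xs)
  have step: "bind_pmf (return_pmf p0) (\<lambda>p. map_pmf (\<lambda>a. p(x := a)) (\<sigma> x (obs Ginfo x h))) = return_pmf (p0(x := q x))"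
    using Cons.prems by (simp add: bind_return_pmf)
  have "\<forall>l\<in>set xs. \<sigma> l (obs Ginfo l h) = return_pmf (q l)" using Cons.prems by simp
  note ih = Cons.IH[OF this, of "p0(x := q x)"]
  show ?case by (simp only: fold_Cons comp_apply step ih)
qed simp

lemma pmf_bind_ge: "pmf M y * pmf (f y) x \<le> pmf (bind_pmf M f) x"
proof -
  have e: "(\<lambda>z. indicator {y} z * pmf (f z) x) = (\<lambda>z. indicator {y} z * pmf (f y) x)"
    by (auto simp: fun_eq_iff indicator_def)
  have "pmf M y * pmf (f y) x = (\<integral>z. indicator {y} z * pmf (f z) x \<partial>measure_pmf M)"
    unfolding e by (simp add: measure_pmf_single)
  also have "\<dots> \<le> (\<integral>z. pmf (f z) x \<partial>measure_pmf M)"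
    by (intro integral_mono measure_pmf.integrable_const_bound[where B=1])
       (auto simp: indicator_def pmf_le_1)
  finally show ?thesis by (simp add: pmf_bind)
qed

lemma pmf_map_ge: "pmf P y \<le> pmf (map_pmf g P) (g y)"
  unfolding pmf_map by (simp flip: measure_pmf_single add: measure_pmf.finite_measure_mono)

lemma fold_profile_pmf_ge:
  "pmf P0 p0 * (\<Prod>l\<leftarrow>xs. pmf (\<sigma> l (obs Ginfo l h)) (q l))
   \<le> pmf (fold (\<lambda>i P. bind_pmf P (\<lambda>p. map_pmf (\<lambda>a. p(i := a)) (\<sigma> i (obs Ginfo i h)))) xs P0)
         (fold (\<lambda>l p. p(l := q l)) xs p0)"
proof (induction xs arbitrary: P0 p0)
  case Nil
  then show ?case by simp
next
  case (Cons x xs)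
  define P1 where "P1 = bind_pmf P0 (\<lambda>p. map_pmf (\<lambda>a. p(x := a)) (\<sigma> x (obs Ginfo x h)))"
  have b: "pmf P0 p0 * pmf (\<sigma> x (obs Ginfo x h)) (q x) \<le> pmf P1 (p0(x := q x))"
  proof -
    have "pmf (\<sigma> x (obs Ginfo x h)) (q x) \<le> pmf (map_pmf (\<lambda>a. p0(x := a)) (\<sigma> x (obs Ginfo x h))) (p0(x := q x))"
      by (rule pmf_map_ge[of _ _ "\<lambda>a. p0(x := a)", simplified])
    then have "pmf P0 p0 * pmf (\<sigma> x (obs Ginfo x h)) (q x) \<le> pmf P0 p0 * pmf (map_pmf (\<lambda>a. p0(x := a)) (\<sigma> x (obs Ginfo x h))) (p0(x := q x))"
      by (simp add: mult_left_mono)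
    also have "\<dots> \<le> pmf P1 (p0(x := q x))" unfolding P1_def by (rule pmf_bind_ge)
    finally show ?thesis .
  qed
  have ih: "pmf P1 (p0(x := q x)) * (\<Prod>l\<leftarrow>xs. pmf (\<sigma> l (obs Ginfo l h)) (q l))
   \<le> pmf (fold (\<lambda>i P. bind_pmf P (\<lambda>p. map_pmf (\<lambda>a. p(i := a)) (\<sigma> i (obs Ginfo i h)))) xs P1)
         (fold (\<lambda>l p. p(l := q l)) xs (p0(x := q x)))" by (rule Cons.IH)
  have nn: "0 \<le> (\<Prod>l\<leftarrow>xs. pmf (\<sigma> l (obs Ginfo l h)) (q l))" by (induction xs) auto
  have "pmf P0 p0 * (\<Prod>l\<leftarrow>x#xs. pmf (\<sigma> l (obs Ginfo l h)) (q l))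
      = (pmf P0 p0 * pmf (\<sigma> x (obs Ginfo x h)) (q x)) * (\<Prod>l\<leftarrow>xs. pmf (\<sigma> l (obs Ginfo l h)) (q l))"
    by simp
  also have "\<dots> \<le> pmf P1 (p0(x := q x)) * (\<Prod>l\<leftarrow>xs. pmf (\<sigma> l (obs Ginfo l h)) (q l))"
    using b nn by (rule mult_right_mono)
  also note ih
  finally show ?case unfolding P1_def by (simp only: fold_Cons comp_apply)
qed

lemma profile_support:
  assumes "p \<in> set_pmf (profile_pmf n Ginfo \<sigma> h)"
  shows "(\<forall>l<n. p l \<in> set_pmf (\<sigma> l (obs Ginfo l h))) \<and> (\<forall>l. n \<le> l \<longrightarrow> p l = (\<lambda>_. None))"
  using fold_profile_support[of p \<sigma> Ginfo h "[0..<n]" "return_pmf (\<lambda>_ _. None)"] assms unfolding profile_pmf_def by auto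

lemma run_support:
  "h' \<in> set_pmf (run n Ginfo \<sigma> k h) \<Longrightarrow>
    fst h' = fst h \<and> length (snd h') = length (snd h) + k \<and> take (length (snd h)) (snd h') = snd h"
  by (induction k arbitrary: h') (auto simp: extend_def)

lemma aff_gt: "influences_avoiding G i (j,m) (l,r) \<Longrightarrow> m < r"
  unfolding influences_avoiding_def by simp

lemma aff_start: "m < r \<Longrightarrow> influences_avoiding G i (j,m) (j,r)"
  unfolding influences_avoiding_def
  by (simp, rule exI[of _ 0], rule exI[of _ "\<lambda>_. j"], auto)

lemma aff_mono: "influences_avoiding G i (j,m) (l,r) \<Longrightarrow> r \<le> r' \<Longrightarrow> influences_avoiding G i (j,m) (l,r')"
  unfolding influences_avoiding_def by (auto, blast intro: less_le_trans)

lemma aff_step: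
  assumes "influences_avoiding G i (j,m) (x,r)" "x \<noteq> i" "(x,l) \<in> G r"
  shows "influences_avoiding G i (j,m) (l, Suc r)"
proof -
  from assms(1) obtain k ch rr where A: "m < r" "ch 0 = j" "ch k = x"
    "\<forall>t\<in>{1..k}. (ch (t - 1), ch t) \<in> G (rr t)"
    "\<forall>t\<in>{1..k}. m \<le> rr t \<and> rr t < r"
    "\<forall>t\<in>{1..<k}. rr t < rr (Suc t)"
    "\<forall>t<k. ch t \<noteq> i"
    unfolding influences_avoiding_def by auto
  define ch' where "ch' = ch(Suc k := l)"
  define rr' where "rr' = rr(Suc k := r)"
  have "ch' 0 = j \<and> ch' (Suc k) = l \<and>
        (\<forall>t\<in>{1..Suc k}. (ch' (t - 1), ch' t) \<in> G (rr' t)) \<and>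
        (\<forall>t\<in>{1..Suc k}. m \<le> rr' t \<and> rr' t < Suc r) \<and>
        (\<forall>t\<in>{1..<Suc k}. rr' t < rr' (Suc t)) \<and>
        (\<forall>t<Suc k. ch' t \<noteq> i)"
  proof (intro conjI ballI allI impI)
    show "ch' 0 = j" using A by (simp add: ch'_def)
    show "ch' (Suc k) = l" by (simp add: ch'_def)
  next
    fix t assume t: "t \<in> {1..Suc k}"
    show "(ch' (t - 1), ch' t) \<in> G (rr' t)"
    proof (cases "t = Suc k")
      case True then show ?thesis using A assms by (simp add: ch'_def rr'_def)
    next
      case False then show ?thesis using A t by (auto simp: ch'_def rr'_def)
    qed
    show "m \<le> rr' t" using A t by (cases "t = Suc k") (auto simp: rr'_def)
    show "rr' t < Suc r"
    proof (cases "t = Suc k")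
      case False
      then have "t \<in> {1..k}" using t by auto
      then show ?thesis using A(5) by (auto simp: rr'_def less_Suc_eq)
    qed (simp add: rr'_def)
  next
    fix t assume t: "t \<in> {1..<Suc k}"
    show "rr' t < rr' (Suc t)"
    proof (cases "t = k")
      case True then show ?thesis using A t by (simp add: rr'_def)
    next
      case False then show ?thesis using A t by (simp add: rr'_def)
    qed
  next
    fix t assume t: "t < Suc k"
    show "ch' t \<noteq> i" using A t assms(2) by (cases "t = k") (auto simp: ch'_def)
  qed
  then show ?thesis unfolding influences_avoiding_def using A(1) by auto
qed




lemma expect_const:
  fixes f :: "'a \<Rightarrow> real"
  assumes "\<forall>x\<in>set_pmf M. f x = c"
  shows "measure_pmf.expectation M f = c"
proof -
  have "measure_pmf.expectation M f = measure_pmf.expectation M (\<lambda>_. c)"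
    by (rule integral_cong_AE) (use assms in \<open>auto simp: AE_measure_pmf_iff\<close>)
  then show ?thesis by simp
qed

lemma expect_bound:
  fixes f :: "'a \<Rightarrow> real"
  assumes "\<forall>x\<in>set_pmf M. \<bar>f x\<bar> \<le> B"
  shows "\<bar>measure_pmf.expectation M f\<bar> \<le> B"
proof -
  have ae: "AE x in measure_pmf M. \<bar>f x\<bar> \<le> B" using assms by (simp add: AE_measure_pmf_iff)
  have int: "integrable (measure_pmf M) f"
    by (rule measure_pmf.integrable_const_bound[where B=B]) (use ae in simp_all)
  have "- B \<le> measure_pmf.expectation M f"
    by (rule measure_pmf.integral_ge_const[OF int]) (use ae in \<open>auto elim!: eventually_mono\<close>)
  moreover have "measure_pmf.expectation M f \<le> B"
    by (rule measure_pmf.integral_le_const[OF int]) (use ae in \<open>auto elim!: eventually_mono\<close>)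
  ultimately show ?thesis by simp
qed

locale dev_setup =
  fixes n :: nat and Gs :: "egraph set" and Ginfo :: "egraph \<Rightarrow> nat \<Rightarrow> nat \<Rightarrow> graph set"
    and \<sigma> :: protocol and G :: egraph and i j m \<rho> :: nat
  assumes wf: "wf_egraphs n Gs"
    and info: "info_ok n Gs Ginfo"
    and GGs: "G \<in> Gs"
    and i_lt: "i < n"
    and edge: "(i,j) \<in> G m"
    and vp: "valid_protocol n Gs Ginfo \<sigma>"
    and coop: "\<forall>h. valid_hist Gs h \<and> all_coop h \<longrightarrow>
        (\<forall>l<n. \<sigma> l (obs Ginfo l h) = return_pmf (coop_action (fst h) (length (snd h)) l))"
    and noPO: "\<not> (\<exists>l m'. punishment_opportunity G i (j,m) (l,m') \<and> m' < m + \<rho>)"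
begin

definition c :: "nat \<Rightarrow> history" where "c t = (G, map (coop_action G) [0..<t])"
definition da :: ract where "da = (coop_action G m i)(j := Some Defect)"
definition acti :: "nat \<Rightarrow> ract" where "acti r = (if r = m then da else coop_action G r i)"
definition cp' :: "nat \<Rightarrow> profile" where "cp' r = (coop_action G r)(i := acti r)"
definition d :: "nat \<Rightarrow> history" where "d t = (G, map cp' [0..<t])"
definition s :: strategy where
  "s ob = (if \<exists>t\<ge>m. ob = obs Ginfo i (d t) then return_pmf (acti (length (fst (snd ob)))) else \<sigma> i ob)"
definition aff :: "nat \<Rightarrow> nat \<Rightarrow> bool" where "aff l r = influences_avoiding G i (j,m) (l,r)"

lemma wfG: "wf_graph n (G r)" using wf GGs unfolding wf_egraphs_def by auto

lemma symG: "(a,b) \<in> G r \<Longrightarrow> (b,a) \<in> G r"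
  using wfG[of r] unfolding wf_graph_def sym_def by blast

lemma irreflG: "(a,a) \<notin> G r"
  using wfG[of r] unfolding wf_graph_def irrefl_def by blast

lemma boundG: "(a,b) \<in> G r \<Longrightarrow> a < n \<and> b < n"
  using wfG[of r] unfolding wf_graph_def by blast

lemma coop_action_ge: "n \<le> l \<Longrightarrow> coop_action G r l = (\<lambda>_. None)"
  using boundG by (fastforce simp: coop_action_def fun_eq_iff)

lemma valid_coop: "valid_ract (G r) l (coop_action G r l)"
  by (simp add: valid_ract_def coop_action_def)

lemma valid_acti: "valid_ract (G r) i (acti r)"
  using edge by (auto simp: valid_ract_def acti_def da_def coop_action_def)

lemma c_valid: "valid_hist Gs (c t)"
  using GGs by (simp add: c_def valid_hist_def valid_profile_def valid_coop)

lemma c_coop: "all_coop (c t)"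
  by (simp add: c_def all_coop_def coop_action_def)

lemma c_simps[simp]: "fst (c t) = G" "length (snd (c t)) = t"
  by (simp_all add: c_def)

lemma c_Suc: "c (Suc t) = extend (c t) (coop_action G t)"
  by (simp add: c_def extend_def)

lemma sigma_c: "l < n \<Longrightarrow> \<sigma> l (obs Ginfo l (c t)) = return_pmf (coop_action G t l)"
  using coop c_valid[of t] c_coop[of t] by (metis c_simps)

lemma profile_c: "profile_pmf n Ginfo \<sigma> (c t) = return_pmf (coop_action G t)"
proof -
  have "profile_pmf n Ginfo \<sigma> (c t) = return_pmf (fold (\<lambda>l p. p(l := coop_action G t l)) [0..<n] (\<lambda>_ _. None))"
    unfolding profile_pmf_def by (rule fold_profile_return) (simp add: sigma_c)
  also have "fold (\<lambda>l p. p(l := coop_action G t l)) [0..<n] (\<lambda>_ _. None) = coop_action G t"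
    by (auto simp: fold_upd_eq fun_eq_iff coop_action_ge)
  finally show ?thesis .
qed

lemma run_c: "run n Ginfo \<sigma> k (c t) = return_pmf (c (t + k))"
  by (induction k) (simp_all add: profile_c c_Suc bind_return_pmf)


lemma obs_eqI:
  assumes "fst h1 = fst h2" "length (snd h1) = length (snd h2)"
    "\<And>r. r < length (snd h1) \<Longrightarrow> (snd h1!r) l = (snd h2!r) l \<and> (\<forall>x. (snd h1!r) x l = (snd h2!r) x l)"
  shows "obs Ginfo l h1 = obs Ginfo l h2"
proof -
  have "map (\<lambda>p. p l) (snd h1) = map (\<lambda>p. p l) (snd h2)"
    by (rule nth_equalityI) (use assms in simp_all)
  moreover have "map (\<lambda>p. \<lambda>x. p x l) (snd h1) = map (\<lambda>p. \<lambda>x. p x l) (snd h2)"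
    by (rule nth_equalityI) (use assms in \<open>simp_all add: fun_eq_iff\<close>)
  ultimately show ?thesis using assms(1,2) unfolding obs_def by simp
qed

lemma obs_length: "obs Ginfo l h1 = obs Ginfo l h2 \<Longrightarrow> length (snd h1) = length (snd h2)"
  unfolding obs_def by (drule arg_cong[where f="\<lambda>x. length (fst (snd x))"]) simp

lemma obs_Ginfo: "obs Ginfo l h1 = obs Ginfo l h2 \<Longrightarrow> Ginfo (fst h1) l (length (snd h1)) = Ginfo (fst h2) l (length (snd h1))"
proof -
  assume a: "obs Ginfo l h1 = obs Ginfo l h2"
  have len: "length (snd h1) = length (snd h2)" using obs_length[OF a] .
  from a have "map (\<lambda>k. Ginfo (fst h1) l k) [0..<Suc (length (snd h1))] = map (\<lambda>k. Ginfo (fst h2) l k) [0..<Suc (length (snd h2))]"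
    unfolding obs_def by simp
  then have "map (\<lambda>k. Ginfo (fst h1) l k) [0..<Suc (length (snd h1))] ! length (snd h1) = map (\<lambda>k. Ginfo (fst h2) l k) [0..<Suc (length (snd h2))] ! length (snd h1)"
    by simp
  then show ?thesis using len by (simp del: upt_Suc)
qed

lemma s_valid: "valid_strategy Gs Ginfo i s"
  unfolding valid_strategy_def
proof (intro allI impI)
  fix h assume vh: "valid_hist Gs h"
  show "set_pmf (s (obs Ginfo i h)) \<subseteq> {a. valid_ract (fst h (length (snd h))) i a}"
  proof (cases "\<exists>t\<ge>m. obs Ginfo i h = obs Ginfo i (d t)")
    case True
    then obtain t where t: "obs Ginfo i h = obs Ginfo i (d t)" by blast
    have len: "length (snd h) = t" using obs_length[OF t] by (simp add: d_def)
    have lo: "length (fst (snd (obs Ginfo i h))) = t" using len by (simp add: obs_def)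
    have gi: "Ginfo (fst h) i t = Ginfo G i t" using obs_Ginfo[OF t] len by (simp add: d_def)
    have G'Gs: "fst h \<in> Gs" using vh by (simp add: valid_hist_def)
    have i1: "\<forall>H\<in>Ginfo G i t. wf_graph n H \<and> (\<forall>x. ((i,x) \<in> H) = ((i,x) \<in> G t))" "G t \<in> Ginfo G i t"
      using info GGs i_lt unfolding info_ok_def by simp_all
    have i2: "\<forall>H\<in>Ginfo (fst h) i t. wf_graph n H \<and> (\<forall>x. ((i,x) \<in> H) = ((i,x) \<in> fst h t))"
      using info G'Gs i_lt unfolding info_ok_def by simp
    have nb: "\<And>x. ((i,x) \<in> G t) = ((i,x) \<in> fst h t)" using i1(2) i2 gi by auto
    have "valid_ract (fst h t) i (acti t)" using valid_acti[of t] nb by (simp add: valid_ract_def)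
    then show ?thesis using True lo len by (simp add: s_def)
  next
    case False
    then have "s (obs Ginfo i h) = \<sigma> i (obs Ginfo i h)" unfolding s_def by (rule if_not_P)
    moreover have "valid_strategy Gs Ginfo i (\<sigma> i)" using vp i_lt unfolding valid_protocol_def by blast
    then have "set_pmf (\<sigma> i (obs Ginfo i h)) \<subseteq> {a. valid_ract (fst h (length (snd h))) i a}"
      using vh unfolding valid_strategy_def by blast
    ultimately show ?thesis by simp
  qed
qed


definition Inv :: "nat \<Rightarrow> history \<Rightarrow> bool" where
  "Inv k h \<longleftrightarrow> valid_hist Gs h \<and> fst h = G \<and> length (snd h) = m + k \<and>
     (\<forall>r<m+k. \<forall>l x. (l = i \<or> \<not> aff l r) \<longrightarrow> (snd h ! r) l x = cp' r l x)"

lemma cp'_ne: "r \<noteq> m \<Longrightarrow> cp' r = coop_action G r"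
  by (auto simp: cp'_def acti_def fun_eq_iff)

lemma cp'_other: "l \<noteq> i \<Longrightarrow> cp' r l = coop_action G r l"
  by (simp add: cp'_def)

lemma cp'_i: "cp' r i = acti r"
  by (simp add: cp'_def)

lemma coop_entry: "(coop_action G r a b \<noteq> None) = ((a,b) \<in> G r)"
  by (simp add: coop_action_def)

lemma cp'_entry: "(cp' r a b \<noteq> None) = ((a,b) \<in> G r)"
  using valid_acti[of r] by (cases "a = i") (auto simp: cp'_def coop_action_def valid_ract_def)

lemma valid_entry:
  assumes "valid_hist Gs h" "fst h = G" "r < length (snd h)"
  shows "((snd h ! r) a b \<noteq> None) = ((a,b) \<in> G r)"
  using assms unfolding valid_hist_def valid_profile_def valid_ract_def by auto

lemma aff_nonmono: "\<not> aff l t \<Longrightarrow> r \<le> t \<Longrightarrow> \<not> aff l r"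
  unfolding aff_def using aff_mono by blast

lemma acti_coop: "\<not> (r = m \<and> l = j) \<Longrightarrow> acti r l = coop_action G r i l"
  by (auto simp: acti_def da_def)

lemma Inv_0: "Inv 0 (c m)"
  unfolding Inv_def using c_valid[of m] by (simp add: c_def cp'_ne)

lemma snd_c_nth: "r < t \<Longrightarrow> snd (c t) ! r = coop_action G r"
  by (simp add: c_def)

lemma snd_d_nth: "r < t \<Longrightarrow> snd (d t) ! r = cp' r"
  by (simp add: d_def)

lemma unaff_obs:
  assumes I: "Inv k h" and li: "l \<noteq> i" and na: "\<not> aff l (m+k)"
  shows "obs Ginfo l h = obs Ginfo l (c (m+k))"
proof (rule obs_eqI)
  show "fst h = fst (c (m+k))" "length (snd h) = length (snd (c (m+k)))" using I by (simp_all add: Inv_def)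
next
  fix r assume "r < length (snd h)"
  then have r: "r < m + k" using I by (simp add: Inv_def)
  have ent: "\<And>l x. l = i \<or> \<not> aff l r \<Longrightarrow> (snd h ! r) l x = cp' r l x" using I r unfolding Inv_def by blast
  have nal: "\<not> aff l r" using aff_nonmono[OF na] r by simp
  have row: "(snd h ! r) l = coop_action G r l"
    using ent[of l] nal li by (simp add: fun_eq_iff cp'_other)
  have col: "(snd h ! r) x l = coop_action G r x l" for x
  proof (cases "x = i")
    case True
    have "\<not> (r = m \<and> l = j)"
    proof
      assume "r = m \<and> l = j"
      then have "aff l (m+k)" using r aff_start[of m "m+k" G i j] by (simp add: aff_def)
      with na show False by simp
    qed
    then show ?thesis using True ent[of i l] by (simp add: cp'_i acti_coop)
  next
    case False
    show ?thesis
    proof (cases "aff x r")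
      case False
      then show ?thesis using ent[of x l] \<open>x \<noteq> i\<close> by (simp add: cp'_other)
    next
      case True
      have "(x,l) \<notin> G r"
      proof
        assume "(x,l) \<in> G r"
        then have "aff l (Suc r)" using True \<open>x \<noteq> i\<close> aff_step unfolding aff_def by blast
        then have "aff l (m+k)" using r aff_mono unfolding aff_def by (metis Suc_leI)
        with na show False by simp
      qed
      moreover have "valid_hist Gs h" "fst h = G" "r < length (snd h)" using I r unfolding Inv_def by simp_all
      ultimately have "(snd h ! r) x l = None" "coop_action G r x l = None"
        using valid_entry[of h r x l] coop_entry[of r x l] by auto
      then show ?thesis by simp
    qed
  qed
  show "(snd h ! r) l = (snd (c (m+k)) ! r) l \<and> (\<forall>x. (snd h ! r) x l = (snd (c (m+k)) ! r) x l)"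
    using row col r by (simp add: snd_c_nth)
qed

lemma i_obs:
  assumes I: "Inv k h" and kr: "k \<le> \<rho>"
  shows "obs Ginfo i h = obs Ginfo i (d (m+k))"
proof (rule obs_eqI)
  show "fst h = fst (d (m+k))" "length (snd h) = length (snd (d (m+k)))" using I by (simp_all add: Inv_def d_def)
next
  fix r assume "r < length (snd h)"
  then have r: "r < m + k" using I by (simp add: Inv_def)
  have ent: "\<And>l x. l = i \<or> \<not> aff l r \<Longrightarrow> (snd h ! r) l x = cp' r l x" using I r unfolding Inv_def by blast
  have col: "(snd h ! r) x i = cp' r x i" for x
  proof (cases "x = i \<or> \<not> aff x r")
    case True then show ?thesis using ent by simp
  next
    case False
    have "(x,i) \<notin> G r"
    proof
      assume "(x,i) \<in> G r"
      then have "(i,x) \<in> G r" by (rule symG)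
      then have "punishment_opportunity G i (j,m) (x,r)"
        using False unfolding punishment_opportunity_def i_edge_def aff_def by simp
      moreover have "r < m + \<rho>" using r kr by simp
      ultimately show False using noPO by blast
    qed
    moreover have "valid_hist Gs h" "fst h = G" "r < length (snd h)" using I r unfolding Inv_def by simp_all
    ultimately have "(snd h ! r) x i = None" "cp' r x i = None"
      using valid_entry[of h r x i] cp'_entry[of r x i] by auto
    then show ?thesis by simp
  qed
  show "(snd h ! r) i = (snd (d (m+k)) ! r) i \<and> (\<forall>x. (snd h ! r) x i = (snd (d (m+k)) ! r) x i)"
    using ent[of i] col r by (simp add: snd_d_nth fun_eq_iff)
qed


abbreviation "\<sigma>' \<equiv> \<sigma>(i := s)"

lemma s_on_d: "k \<le> \<rho> \<Longrightarrow> Inv k h \<Longrightarrow> s (obs Ginfo i h) = return_pmf (acti (m+k))"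
proof -
  assume kr: "k \<le> \<rho>" and I: "Inv k h"
  have e: "obs Ginfo i h = obs Ginfo i (d (m+k))" by (rule i_obs[OF I kr])
  have "\<exists>t\<ge>m. obs Ginfo i h = obs Ginfo i (d t)" using e by (intro exI[of _ "m+k"]) simp
  moreover have "length (fst (snd (obs Ginfo i h))) = m + k" using I by (simp add: obs_def Inv_def)
  ultimately show ?thesis unfolding s_def by simp
qed

lemma Inv_step:
  assumes I: "Inv k h" and kr: "k < \<rho>" and p: "p \<in> set_pmf (profile_pmf n Ginfo \<sigma>' h)"
  shows "Inv (Suc k) (extend h p)"
proof -
  have ps: "\<forall>l<n. p l \<in> set_pmf (\<sigma>' l (obs Ginfo l h))" "\<forall>l. n \<le> l \<longrightarrow> p l = (\<lambda>_. None)"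
    using profile_support[OF p] by auto
  have vh: "valid_hist Gs h" and fh: "fst h = G" and lh: "length (snd h) = m + k"
    using I by (simp_all add: Inv_def)
  have pi: "p i = acti (m+k)"
  proof -
    have "p i \<in> set_pmf (s (obs Ginfo i h))" using ps(1)[rule_format, OF i_lt] by simp
    then show ?thesis using s_on_d[of k h] kr I by simp
  qed
  have pl: "p l = coop_action G (m+k) l" if "l \<noteq> i" "\<not> aff l (m+k)" for l
  proof (cases "l < n")
    case True
    then have "p l \<in> set_pmf (\<sigma> l (obs Ginfo l h))" using ps(1)[rule_format, OF True] that by simp
    also have "\<sigma> l (obs Ginfo l h) = return_pmf (coop_action G (m+k) l)"
      using unaff_obs[OF I that] sigma_c[OF True] by simp
    finally show ?thesis by simp
  next
    case False
    then show ?thesis using ps(2) coop_action_ge by simp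
  qed
  have vp_l: "valid_ract (G (m+k)) l (p l)" for l
  proof (cases "l < n")
    case True
    show ?thesis
    proof (cases "l = i")
      case True
      then show ?thesis using pi valid_acti by simp
    next
      case False
      have "valid_strategy Gs Ginfo l (\<sigma> l)" using vp \<open>l < n\<close> unfolding valid_protocol_def by blast
      then have "set_pmf (\<sigma> l (obs Ginfo l h)) \<subseteq> {a. valid_ract (fst h (length (snd h))) l a}"
        using vh unfolding valid_strategy_def by blast
      moreover have "p l \<in> set_pmf (\<sigma> l (obs Ginfo l h))" using ps(1)[rule_format, OF \<open>l < n\<close>] False by simp
      ultimately show ?thesis using fh lh by auto
    qed
  next
    case False
    then show ?thesis using ps(2) boundG unfolding valid_ract_def by fastforce
  qed
  have "valid_hist Gs (extend h p)"
    using vh fh lh vp_l unfolding valid_hist_def extend_def valid_profile_def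
    by (auto simp: nth_append less_Suc_eq)
  moreover have "\<forall>r<m + Suc k. \<forall>l x. (l = i \<or> \<not> aff l r) \<longrightarrow> (snd (extend h p) ! r) l x = cp' r l x"
  proof (intro allI impI)
    fix r l x assume r: "r < m + Suc k" and la: "l = i \<or> \<not> aff l r"
    show "(snd (extend h p) ! r) l x = cp' r l x"
    proof (cases "r < m + k")
      case True
      then have "(snd h ! r) l x = cp' r l x" using I la unfolding Inv_def by blast
      then show ?thesis using True lh by (simp add: extend_def nth_append)
    next
      case False
      then have rr: "r = m + k" using r by simp
      have "p l x = cp' r l x"
      proof (cases "l = i")
        case True then show ?thesis using pi rr by (simp add: cp'_i)
      next
        case False then show ?thesis using pl[of l] la rr by (simp add: cp'_other)
      qed
      then show ?thesis using rr lh by (simp add: extend_def nth_append)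
    qed
  qed
  ultimately show ?thesis using fh lh unfolding Inv_def by (simp add: extend_def)
qed

lemma Inv_run: "k \<le> \<rho> \<Longrightarrow> h' \<in> set_pmf (run n Ginfo \<sigma>' k (c m)) \<Longrightarrow> Inv k h'"
proof (induction k arbitrary: h')
  case 0
  then show ?case using Inv_0 by simp
next
  case (Suc k)
  from Suc.prems(2) obtain h p where h: "h \<in> set_pmf (run n Ginfo \<sigma>' k (c m))"
    and p: "p \<in> set_pmf (profile_pmf n Ginfo \<sigma>' h)" and e: "h' = extend h p"
    by (simp only: run.simps set_bind_pmf set_map_pmf) blast
  have "Inv k h" using Suc.IH[OF _ h] Suc.prems(1) by simp
  then show ?case using Inv_step[OF _ _ p] e Suc.prems(1) by simp
qed


definition U :: "real \<Rightarrow> real \<Rightarrow> real \<Rightarrow> nat \<Rightarrow> real" where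
  "U \<beta> \<alpha> \<pi> r = round_util \<beta> \<alpha> \<pi> i G r (coop_action G r)"

lemma finN: "finite {x. (i,x) \<in> G r}" and cardN: "card {x. (i,x) \<in> G r} \<le> n"
proof -
  have sub: "{x. (i,x) \<in> G r} \<subseteq> {..<n}" using boundG by auto
  show "finite {x. (i,x) \<in> G r}" using sub finite_subset by blast
  show "card {x. (i,x) \<in> G r} \<le> n" using card_mono[OF _ sub] by simp
qed

lemma util_bound: "\<bar>round_util \<beta> \<alpha> \<pi> i G r p\<bar> \<le> real n * (\<bar>\<beta>\<bar> + 1 + \<bar>\<alpha>\<bar> + \<bar>\<pi>\<bar>)"
proof -
  let ?B = "\<bar>\<beta>\<bar> + 1 + \<bar>\<alpha>\<bar> + \<bar>\<pi>\<bar>"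
  let ?N = "{x. (i,x) \<in> G r}"
  have "\<bar>round_util \<beta> \<alpha> \<pi> i G r p\<bar> \<le> (\<Sum>x\<in>?N. ?B)"
    unfolding round_util_def by (rule order_trans[OF sum_abs sum_mono]) auto
  also have "\<dots> = real (card ?N) * ?B" by simp
  also have "\<dots> \<le> real n * ?B" using cardN[of r] by (intro mult_right_mono) auto
  finally show ?thesis .
qed

lemma round_util_dev:
  assumes k: "k < \<rho>" and I: "Inv (Suc k) h'"
  shows "round_util \<beta> \<alpha> \<pi> i (fst h') (length (snd h') - 1) (last (snd h'))
         = U \<beta> \<alpha> \<pi> (m+k) + (if k = 0 then 1 else 0)"
proof -
  let ?r = "m + k"
  let ?N = "{x. (i,x) \<in> G ?r}"
  have fh: "fst h' = G" and lh: "length (snd h') = Suc (m+k)" using I by (simp_all add: Inv_def)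
  define p where "p = snd h' ! ?r"
  have ne: "snd h' \<noteq> []" using lh by auto
  have lastp: "last (snd h') = p" unfolding p_def using lh ne by (simp add: last_conv_nth)
  have ent: "\<And>l x. l = i \<or> \<not> aff l ?r \<Longrightarrow> p l x = cp' ?r l x"
  proof -
    fix l x assume "l = i \<or> \<not> aff l ?r"
    moreover have "?r < m + Suc k" by simp
    ultimately show "p l x = cp' ?r l x" using I unfolding Inv_def p_def by blast
  qed
  have col: "p x i = coop_action G ?r x i" if "x \<in> ?N" for x
  proof -
    have xi: "x \<noteq> i" using that irreflG by auto
    have "\<not> aff x ?r"
    proof
      assume "aff x ?r"
      then have "punishment_opportunity G i (j,m) (x,?r)"
        using that unfolding punishment_opportunity_def i_edge_def aff_def by simp
      moreover have "m + k < m + \<rho>" using k by simp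
      ultimately show False using noPO by blast
    qed
    then show ?thesis using ent xi by (simp add: cp'_other)
  qed
  have row: "p i x = acti ?r x" for x using ent[of i x] by (simp add: cp'_i)
  have termeq: "(if sends (p x i) then \<beta> else 0) - (if sends (p i x) then 1 else 0)
      - (if sends (p x i) then \<alpha> else 0) - (if p x i = Some Punish then \<pi> else 0)
    = ((if sends (coop_action G ?r x i) then \<beta> else 0) - (if sends (coop_action G ?r i x) then 1 else 0)
      - (if sends (coop_action G ?r x i) then \<alpha> else 0) - (if coop_action G ?r x i = Some Punish then \<pi> else 0))
      + (if ?r = m \<and> x = j then 1 else 0)" if "x \<in> ?N" for x
  proof -
    have "(i,x) \<in> G ?r" using that by simp
    then have ci: "coop_action G ?r i x = Some Cooperate" by (simp add: coop_action_def)
    have "acti ?r x = (if ?r = m \<and> x = j then Some Defect else Some Cooperate)"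
      using ci by (auto simp: acti_def da_def)
    then show ?thesis using col[OF that] row[of x] ci by (auto simp: sends_def)
  qed
  have "round_util \<beta> \<alpha> \<pi> i G ?r p = U \<beta> \<alpha> \<pi> ?r + (\<Sum>x\<in>?N. if ?r = m \<and> x = j then 1 else 0)"
    unfolding round_util_def U_def by (simp add: termeq sum.distrib)
  also have "(\<Sum>x\<in>?N. if ?r = m \<and> x = j then (1::real) else 0) = (if k = 0 then 1 else 0)"
  proof (cases "k = 0")
    case True
    then have "(\<Sum>x\<in>?N. if ?r = m \<and> x = j then (1::real) else 0) = (\<Sum>x\<in>?N. if x = j then 1 else 0)" by simp
    also have "\<dots> = 1" using finN[of ?r] edge True by (simp add: sum.delta)
    finally show ?thesis using True by simp
  qed simp
  finally show ?thesis using fh lh lastp by simp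
qed

lemma E_sigma:
  "measure_pmf.expectation (run n Ginfo \<sigma> (Suc k) (c m))
     (\<lambda>h'. round_util \<beta> \<alpha> \<pi> i (fst h') (length (snd h') - 1) (last (snd h'))) = U \<beta> \<alpha> \<pi> (m+k)"
proof -
  have e: "run n Ginfo \<sigma> (Suc k) (c m) = return_pmf (c (m + Suc k))" by (rule run_c)
  have "last (snd (c (m + Suc k))) = coop_action G (m+k)" by (simp add: c_def)
  then show ?thesis unfolding e by (simp add: U_def)
qed

lemma E_dev_small:
  assumes "k < \<rho>"
  shows "measure_pmf.expectation (run n Ginfo \<sigma>' (Suc k) (c m))
     (\<lambda>h'. round_util \<beta> \<alpha> \<pi> i (fst h') (length (snd h') - 1) (last (snd h'))) = U \<beta> \<alpha> \<pi> (m+k) + (if k = 0 then 1 else 0)"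
  by (rule expect_const) (use assms Inv_run round_util_dev in auto)

lemma E_dev_bound:
  "\<bar>measure_pmf.expectation (run n Ginfo \<tau> (Suc k) (c m))
     (\<lambda>h'. round_util \<beta> \<alpha> \<pi> i (fst h') (length (snd h') - 1) (last (snd h')))\<bar>
    \<le> real n * (\<bar>\<beta>\<bar> + 1 + \<bar>\<alpha>\<bar> + \<bar>\<pi>\<bar>)"
proof (rule expect_bound, rule ballI)
  fix h' assume "h' \<in> set_pmf (run n Ginfo \<tau> (Suc k) (c m))"
  then have "fst h' = G" using run_support by fastforce
  then show "\<bar>round_util \<beta> \<alpha> \<pi> i (fst h') (length (snd h') - 1) (last (snd h'))\<bar> \<le> real n * (\<bar>\<beta>\<bar> + 1 + \<bar>\<alpha>\<bar> + \<bar>\<pi>\<bar>)"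
    using util_bound by simp
qed


lemma util_gain:
  assumes d0: "0 < \<delta>" and d1: "\<delta> < 1" and r0: "0 < \<rho>"
    and small: "2 * (real n * (\<bar>\<beta>\<bar> + 1 + \<bar>\<alpha>\<bar> + \<bar>\<pi>\<bar>)) * (\<delta> ^ \<rho> / (1 - \<delta>)) < 1"
  shows "util n Ginfo \<beta> \<alpha> \<pi> \<delta> \<sigma> i (c m) < util n Ginfo \<beta> \<alpha> \<pi> \<delta> \<sigma>' i (c m)"
proof -
  define C where "C = real n * (\<bar>\<beta>\<bar> + 1 + \<bar>\<alpha>\<bar> + \<bar>\<pi>\<bar>)"
  define F where "F = (\<lambda>h'. round_util \<beta> \<alpha> \<pi> i (fst h') (length (snd h') - 1) (last (snd h')))"
  define a where "a k = \<delta> ^ k * measure_pmf.expectation (run n Ginfo \<sigma> (Suc k) (c m)) F" for k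
  define b where "b k = \<delta> ^ k * measure_pmf.expectation (run n Ginfo \<sigma>' (Suc k) (c m)) F" for k
  define g where "g k = (if \<rho> \<le> k then \<delta> ^ k else 0)" for k
  define e where "e k = (if k = 0 then 1 else 0) - 2 * C * g k" for k
  have C0: "0 \<le> C" unfolding C_def by simp
  have geo: "summable (\<lambda>k. C * \<delta> ^ k)"
    using d0 d1 by (intro summable_mult summable_geometric) simp
  have absa: "\<bar>a k\<bar> \<le> C * \<delta> ^ k" for k
    unfolding a_def C_def F_def using E_dev_bound[where \<tau>=\<sigma> and k=k and \<beta>=\<beta> and \<alpha>=\<alpha> and \<pi>=\<pi>] d0
    by (simp add: abs_mult mult.commute mult_right_mono)
  have absb: "\<bar>b k\<bar> \<le> C * \<delta> ^ k" for k
    unfolding b_def C_def F_def using E_dev_bound[where \<tau>=\<sigma>' and k=k and \<beta>=\<beta> and \<alpha>=\<alpha> and \<pi>=\<pi>] d0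
    by (simp add: abs_mult mult.commute mult_right_mono)
  have sa: "summable a" by (rule summable_comparison_test'[OF geo]) (use absa in simp)
  have sb: "summable b" by (rule summable_comparison_test'[OF geo]) (use absb in simp)
  have gs: "g sums (\<delta> ^ \<rho> / (1 - \<delta>))"
  proof -
    have "(\<lambda>k. \<delta> ^ \<rho> * \<delta> ^ k) sums (\<delta> ^ \<rho> * (1 / (1 - \<delta>)))"
      using d0 d1 by (intro sums_mult geometric_sums) simp
    then have "(\<lambda>k. g (k + \<rho>)) sums (\<delta> ^ \<rho> / (1 - \<delta>))"
      by (simp add: g_def power_add mult.commute)
    then have "g sums (\<delta> ^ \<rho> / (1 - \<delta>) + (\<Sum>k<\<rho>. g k))" by (simp add: sums_iff_shift)
    moreover have "(\<Sum>k<\<rho>. g k) = 0" by (simp add: g_def)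
    ultimately show ?thesis by simp
  qed
  have es: "e sums (1 - 2 * C * (\<delta> ^ \<rho> / (1 - \<delta>)))"
    unfolding e_def by (intro sums_diff sums_mult gs) (use sums_single[of 0 "\<lambda>_. 1::real"] in simp)
  have le: "e k \<le> b k - a k" for k
  proof (cases "k < \<rho>")
    case True
    have "b k - a k = \<delta> ^ k * (if k = 0 then 1 else 0)"
      unfolding a_def b_def F_def using E_dev_small[OF True] E_sigma by (simp add: algebra_simps)
    then show ?thesis using True by (simp add: e_def g_def)
  next
    case False
    then have k0: "k \<noteq> 0" using r0 by auto
    have "\<bar>measure_pmf.expectation (run n Ginfo \<sigma>' (Suc k) (c m)) F\<bar> \<le> C"
         "\<bar>measure_pmf.expectation (run n Ginfo \<sigma> (Suc k) (c m)) F\<bar> \<le> C"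
      unfolding C_def F_def by (rule E_dev_bound)+
    then have "- 2 * C \<le> measure_pmf.expectation (run n Ginfo \<sigma>' (Suc k) (c m)) F - measure_pmf.expectation (run n Ginfo \<sigma> (Suc k) (c m)) F"
      by linarith
    then have "\<delta> ^ k * (- 2 * C) \<le> \<delta> ^ k * (measure_pmf.expectation (run n Ginfo \<sigma>' (Suc k) (c m)) F - measure_pmf.expectation (run n Ginfo \<sigma> (Suc k) (c m)) F)"
      using d0 by (intro mult_left_mono) simp_all
    then show ?thesis using False k0 unfolding e_def g_def a_def b_def by (simp add: algebra_simps)
  qed
  have "1 - 2 * C * (\<delta> ^ \<rho> / (1 - \<delta>)) = suminf e" using es by (simp add: sums_iff)
  also have "\<dots> \<le> (\<Sum>k. b k - a k)"
    by (rule suminf_le[OF le]) (use es sa sb in \<open>auto simp: sums_iff intro: summable_diff\<close>)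
  also have "\<dots> = suminf b - suminf a" using suminf_diff[OF sb sa] by simp
  finally have "0 < suminf b - suminf a" using small unfolding C_def by simp
  moreover have "util n Ginfo \<beta> \<alpha> \<pi> \<delta> \<sigma> i (c m) = suminf a" "util n Ginfo \<beta> \<alpha> \<pi> \<delta> \<sigma>' i (c m) = suminf b"
    unfolding util_def a_def b_def F_def by simp_all
  ultimately show ?thesis by simp
qed


lemma profile_pmf_ge:
  "(\<Prod>l\<in>{0..<n}. pmf (\<tau> l (obs Ginfo l h)) (coop_action G r l)) \<le> pmf (profile_pmf n Ginfo \<tau> h) (coop_action G r)"
proof -
  have "pmf (return_pmf (\<lambda>_ _. None)) (\<lambda>_ _. None) * (\<Prod>l\<leftarrow>[0..<n]. pmf (\<tau> l (obs Ginfo l h)) (coop_action G r l))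
     \<le> pmf (fold (\<lambda>i P. bind_pmf P (\<lambda>p. map_pmf (\<lambda>a. p(i := a)) (\<tau> i (obs Ginfo i h)))) [0..<n] (return_pmf (\<lambda>_ _. None)))
         (fold (\<lambda>l p. p(l := coop_action G r l)) [0..<n] (\<lambda>_ _. None))"
    using fold_profile_pmf_ge[of "return_pmf (\<lambda>_ _. None)" "\<lambda>_ _. None" \<tau> Ginfo h "coop_action G r" "[0..<n]"] by simp
  moreover have "fold (\<lambda>l p. p(l := coop_action G r l)) [0..<n] (\<lambda>_ _. None) = coop_action G r"
    by (auto simp: fold_upd_eq fun_eq_iff coop_action_ge)
  moreover have "(\<Prod>l\<leftarrow>[0..<n]. pmf (\<tau> l (obs Ginfo l h)) (coop_action G r l)) = (\<Prod>l\<in>{0..<n}. pmf (\<tau> l (obs Ginfo l h)) (coop_action G r l))"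
    using prod.distinct_set_conv_list[of "[0..<n]" "\<lambda>l. pmf (\<tau> l (obs Ginfo l h)) (coop_action G r l)"] by simp
  ultimately show ?thesis unfolding profile_pmf_def by simp
qed

lemma c0: "c 0 = (G, [])" by (simp add: c_def)

lemma run_pmf_ge:
  "(\<Prod>r\<in>{0..<t}. \<Prod>l\<in>{0..<n}. pmf (\<tau> l (obs Ginfo l (c r))) (coop_action G r l)) \<le> pmf (run n Ginfo \<tau> t (G, [])) (c t)"
proof (induction t)
  case 0
  then show ?case by (simp add: c0)
next
  case (Suc t)
  let ?Q = "\<lambda>r. \<Prod>l\<in>{0..<n}. pmf (\<tau> l (obs Ginfo l (c r))) (coop_action G r l)"
  have q0: "0 \<le> ?Q r" for r by (intro prod_nonneg) simp
  have "(\<Prod>r\<in>{0..<Suc t}. ?Q r) = (\<Prod>r\<in>{0..<t}. ?Q r) * ?Q t" by simp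
  also have "\<dots> \<le> pmf (run n Ginfo \<tau> t (G, [])) (c t) * pmf (profile_pmf n Ginfo \<tau> (c t)) (coop_action G t)"
    by (intro mult_mono Suc.IH profile_pmf_ge q0) simp
  also have "\<dots> \<le> pmf (run n Ginfo \<tau> t (G, [])) (c t) * pmf (map_pmf (extend (c t)) (profile_pmf n Ginfo \<tau> (c t))) (c (Suc t))"
    unfolding c_Suc by (intro mult_left_mono pmf_map_ge) simp
  also have "\<dots> \<le> pmf (run n Ginfo \<tau> (Suc t) (G, [])) (c (Suc t))"
    by (simp only: run.simps) (rule pmf_bind_ge)
  finally show ?case .
qed

lemma belief_util:
  assumes cons: "consistent n Gs Ginfo \<sigma> \<mu>"
  shows "util_I n Ginfo \<beta> \<alpha> \<pi> \<delta> \<mu> \<tau> G i (infoset Gs Ginfo i (c m)) = util n Ginfo \<beta> \<alpha> \<pi> \<delta> \<tau> i (c m)"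
proof -
  define I where "I = infoset Gs Ginfo i (c m)"
  have hI: "c m \<in> I" unfolding I_def infoset_def using c_valid by simp
  have II: "I \<in> infosets_G Gs Ginfo i G" unfolding I_def infosets_G_def using c_valid[of m]
    by (intro CollectI exI[of _ "c m"]) simp
  have lenI: "length (snd h) = m" if "h \<in> I" for h
  proof -
    have "obs Ginfo i h = obs Ginfo i (c m)" using that unfolding I_def infoset_def by simp
    from obs_length[OF this] show ?thesis by simp
  qed
  from cons obtain \<sigma>c :: "nat \<Rightarrow> protocol" where
    conv: "\<forall>i<n. \<forall>h. valid_hist Gs h \<longrightarrow> (\<forall>a.
          (\<lambda>c. pmf (\<sigma>c c i (obs Ginfo i h)) a) \<longlonglongrightarrow> pmf (\<sigma> i (obs Ginfo i h)) a)" and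
    rat: "\<forall>G\<in>Gs. \<forall>i<n. \<forall>I\<in>infosets_G Gs Ginfo i G. \<forall>h\<in>I.
          (\<lambda>c. Pr n Ginfo (\<sigma>c c) G h / infsum (Pr n Ginfo (\<sigma>c c) G) I) \<longlonglongrightarrow> \<mu> G i I h"
    using cons unfolding consistent_def apply (elim exE conjE) by (rule that)
  define M where "M x = run n Ginfo (\<sigma>c x) m (G, [])" for x
  define P0 where "P0 x = pmf (M x) (c m)" for x
  define D where "D x = infsum (Pr n Ginfo (\<sigma>c x) G) I" for x
  have PrI: "Pr n Ginfo (\<sigma>c x) G h = pmf (M x) h" if "h \<in> I" for x h
    using lenI[OF that] unfolding Pr_def M_def by simp
  have Dm: "D x = measure (measure_pmf (M x)) I" for x
  proof -
    have "D x = infsum (pmf (M x)) I" unfolding D_def by (rule infsum_cong) (simp add: PrI)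
    also have "\<dots> = infsetsum (pmf (M x)) I" by (rule infsetsum_infsum[symmetric]) (rule pmf_abs_summable)
    also have "\<dots> = measure (measure_pmf (M x)) I" by (simp add: measure_pmf_conv_infsetsum)
    finally show ?thesis .
  qed
  have D1: "D x \<le> 1" for x unfolding Dm by simp
  have PD: "P0 x \<le> D x" for x
    unfolding Dm P0_def using hI by (simp flip: measure_pmf_single add: measure_pmf.finite_measure_mono)
  let ?L = "\<lambda>x. \<Prod>r\<in>{0..<m}. \<Prod>l\<in>{0..<n}. pmf (\<sigma>c x l (obs Ginfo l (c r))) (coop_action G r l)"
  have Llim: "?L \<longlonglongrightarrow> (\<Prod>r\<in>{0..<m}. \<Prod>l\<in>{0..<n}. (1::real))"
  proof (intro tendsto_prod)
    fix r l assume "l \<in> {0..<n}"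
    then have ln: "l < n" by simp
    have "(\<lambda>x. pmf (\<sigma>c x l (obs Ginfo l (c r))) (coop_action G r l)) \<longlonglongrightarrow> pmf (\<sigma> l (obs Ginfo l (c r))) (coop_action G r l)"
      using conv[rule_format, OF ln c_valid] by simp
    then show "(\<lambda>x. pmf (\<sigma>c x l (obs Ginfo l (c r))) (coop_action G r l)) \<longlonglongrightarrow> 1"
      using sigma_c[OF ln] by simp
  qed
  have P0lim: "P0 \<longlonglongrightarrow> 1"
  proof (rule tendsto_sandwich[of ?L _ _ "\<lambda>_. 1"])
    show "\<forall>\<^sub>F x in sequentially. ?L x \<le> P0 x" unfolding P0_def M_def by (intro always_eventually allI run_pmf_ge)
    show "\<forall>\<^sub>F x in sequentially. P0 x \<le> 1" unfolding P0_def by (simp add: pmf_le_1)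
    show "?L \<longlonglongrightarrow> 1" using Llim by simp
  qed simp
  have evpos: "\<forall>\<^sub>F x in sequentially. 0 < P0 x"
    using order_tendstoD(1)[OF P0lim, of 0] by simp
  have mu_h0: "\<mu> G i I (c m) = 1"
  proof -
    have r1: "(\<lambda>x. Pr n Ginfo (\<sigma>c x) G (c m) / D x) \<longlonglongrightarrow> \<mu> G i I (c m)"
      using rat[rule_format, OF GGs i_lt II hI] unfolding D_def by simp
    have r2: "(\<lambda>x. Pr n Ginfo (\<sigma>c x) G (c m) / D x) \<longlonglongrightarrow> 1"
    proof (rule tendsto_sandwich[of P0 _ _ "\<lambda>_. 1"])
      show "\<forall>\<^sub>F x in sequentially. P0 x \<le> Pr n Ginfo (\<sigma>c x) G (c m) / D x"
        using evpos
      proof (rule eventually_mono)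
        fix x assume p: "0 < P0 x"
        have "P0 x * 1 \<le> P0 x / D x" using p D1[of x] PD[of x]
          by (simp add: divide_simps)
        then show "P0 x \<le> Pr n Ginfo (\<sigma>c x) G (c m) / D x" using PrI[OF hI] unfolding P0_def by simp
      qed
      show "\<forall>\<^sub>F x in sequentially. Pr n Ginfo (\<sigma>c x) G (c m) / D x \<le> 1"
        using evpos
      proof (rule eventually_mono)
        fix x assume p: "0 < P0 x"
        then show "Pr n Ginfo (\<sigma>c x) G (c m) / D x \<le> 1" using PD[of x] PrI[OF hI] unfolding P0_def
          by (simp add: divide_simps)
      qed
    qed (use P0lim in simp_all)
    show ?thesis using LIMSEQ_unique[OF r1 r2] .
  qed
  have mu_other: "\<mu> G i I h = 0" if hI': "h \<in> I" and hne: "h \<noteq> c m" for h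
  proof -
    have r1: "(\<lambda>x. Pr n Ginfo (\<sigma>c x) G h / D x) \<longlonglongrightarrow> \<mu> G i I h"
      using rat[rule_format, OF GGs i_lt II hI'] unfolding D_def by simp
    have ub: "(\<lambda>x. (1 - P0 x) / P0 x) \<longlonglongrightarrow> (1 - 1) / 1"
      by (intro tendsto_intros P0lim) simp
    have r2: "(\<lambda>x. Pr n Ginfo (\<sigma>c x) G h / D x) \<longlonglongrightarrow> 0"
    proof (rule tendsto_sandwich[of "\<lambda>_. 0" _ _ "\<lambda>x. (1 - P0 x) / P0 x"])
      show "\<forall>\<^sub>F x in sequentially. 0 \<le> Pr n Ginfo (\<sigma>c x) G h / D x"
      proof (intro always_eventually allI)
        fix x show "0 \<le> Pr n Ginfo (\<sigma>c x) G h / D x"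
          using PrI[OF hI', of x] Dm[of x] by simp
      qed
      show "\<forall>\<^sub>F x in sequentially. Pr n Ginfo (\<sigma>c x) G h / D x \<le> (1 - P0 x) / P0 x"
        using evpos
      proof (rule eventually_mono)
        fix x assume p: "0 < P0 x"
        have "pmf (M x) h + P0 x = measure (measure_pmf (M x)) {h, c m}"
          unfolding P0_def using hne by (simp add: measure_measure_pmf_finite)
        also have "\<dots> \<le> 1" by simp
        finally have hb: "pmf (M x) h \<le> 1 - P0 x" by simp
        have "pmf (M x) h / D x \<le> pmf (M x) h / P0 x"
          using p PD[of x] by (intro divide_left_mono) simp_all
        also have "\<dots> \<le> (1 - P0 x) / P0 x" using hb p by (intro divide_right_mono) simp_all
        finally show "Pr n Ginfo (\<sigma>c x) G h / D x \<le> (1 - P0 x) / P0 x" using PrI[OF hI'] by simp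
      qed
    qed (use ub in simp_all)
    show ?thesis using LIMSEQ_unique[OF r1 r2] .
  qed
  have "util_I n Ginfo \<beta> \<alpha> \<pi> \<delta> \<mu> \<tau> G i I = infsum (\<lambda>h. \<mu> G i I h * util n Ginfo \<beta> \<alpha> \<pi> \<delta> \<tau> i h) {c m}"
    unfolding util_I_def by (rule infsum_cong_neutral) (use hI mu_other in auto)
  also have "\<dots> = util n Ginfo \<beta> \<alpha> \<pi> \<delta> \<tau> i (c m)" using mu_h0 by simp
  finally show ?thesis unfolding I_def .
qed

end

theorem theorem1:
  fixes n :: nat and Gs :: "egraph set"
    and Ginfo :: "egraph \<Rightarrow> nat \<Rightarrow> nat \<Rightarrow> graph set"
    and \<beta> \<alpha> \<pi> \<delta> :: real
  assumes "\<alpha> \<ge> 0" and "0 < \<delta>" and "\<delta> < 1"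
    and "wf_egraphs n Gs"
    and "info_ok n Gs Ginfo"
    and "\<not> timely_punishments n Gs"
  shows "\<not> (\<exists>\<sigma>. enforces_accountability n Gs Ginfo \<beta> \<alpha> \<pi> \<delta> \<sigma>)"
proof
  assume "\<exists>\<sigma>. enforces_accountability n Gs Ginfo \<beta> \<alpha> \<pi> \<delta> \<sigma>"
  then obtain \<sigma> where ea: "enforces_accountability n Gs Ginfo \<beta> \<alpha> \<pi> \<delta> \<sigma>" by blast
  have coop: "\<forall>h. valid_hist Gs h \<and> all_coop h \<longrightarrow>
        (\<forall>l<n. \<sigma> l (obs Ginfo l h) = return_pmf (coop_action (fst h) (length (snd h)) l))"
    using ea unfolding enforces_accountability_def by blast
  have oape: "OAPE n Gs Ginfo \<beta> \<alpha> \<pi> \<delta> \<sigma>" using ea unfolding enforces_accountability_def by blast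
  then have vp: "valid_protocol n Gs Ginfo \<sigma>" unfolding OAPE_def by blast
  from oape obtain \<mu> where cons: "consistent n Gs Ginfo \<sigma> \<mu>" and
    opt: "\<forall>G\<in>Gs. \<forall>i<n. \<forall>s. valid_strategy Gs Ginfo i s \<longrightarrow>
           (\<forall>I\<in>infosets_G Gs Ginfo i G.
              util_I n Ginfo \<beta> \<alpha> \<pi> \<delta> \<mu> \<sigma> G i I \<ge> util_I n Ginfo \<beta> \<alpha> \<pi> \<delta> \<mu> (\<sigma>(i := s)) G i I)"
    unfolding OAPE_def apply (elim conjE exE) by (rule that)
  define C where "C = real n * (\<bar>\<beta>\<bar> + 1 + \<bar>\<alpha>\<bar> + \<bar>\<pi>\<bar>)"
  have "(\<lambda>k. 2 * C * (\<delta> ^ k / (1 - \<delta>))) \<longlonglongrightarrow> 2 * C * (0 / (1 - \<delta>))"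
    using assms(2,3) by (intro tendsto_intros LIMSEQ_power_zero) auto
  then have lim: "(\<lambda>k. 2 * C * (\<delta> ^ k / (1 - \<delta>))) \<longlonglongrightarrow> 0" by simp
  have "\<forall>\<^sub>F k in sequentially. 2 * C * (\<delta> ^ k / (1 - \<delta>)) < 1"
    using order_tendstoD(2)[OF lim, of 1] by simp
  moreover have "\<forall>\<^sub>F k in sequentially. 0 < k" by (rule eventually_gt_at_top)
  ultimately have "\<forall>\<^sub>F k in sequentially. 0 < k \<and> 2 * C * (\<delta> ^ k / (1 - \<delta>)) < 1"
    by (rule eventually_conj[rotated])
  then obtain \<rho> :: nat where r0: "0 < \<rho>" and small: "2 * C * (\<delta> ^ \<rho> / (1 - \<delta>)) < 1"
    unfolding eventually_sequentially by blast
  have "\<not> (\<forall>G\<in>Gs. \<forall>i<n. \<forall>j m. i_edge G i (j, m) \<longrightarrow>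
        (\<exists>l m'. punishment_opportunity G i (j, m) (l, m') \<and> m' < m + \<rho>))"
    using assms(6) r0 unfolding timely_punishments_def by blast
  then obtain G i j m where GGs: "G \<in> Gs" and i_lt: "i < n" and ie: "i_edge G i (j, m)"
    and noPO: "\<not> (\<exists>l m'. punishment_opportunity G i (j, m) (l, m') \<and> m' < m + \<rho>)"
    by blast
  interpret D: dev_setup n Gs Ginfo \<sigma> G i j m \<rho>
    by unfold_locales (use assms(4,5) GGs i_lt ie vp coop noPO in \<open>simp_all add: i_edge_def\<close>)
  have II: "infoset Gs Ginfo i (D.c m) \<in> infosets_G Gs Ginfo i G" unfolding infosets_G_def using D.c_valid[of m]
    by (intro CollectI exI[of _ "D.c m"]) simp
  have "util_I n Ginfo \<beta> \<alpha> \<pi> \<delta> \<mu> (\<sigma>(i := D.s)) G i (infoset Gs Ginfo i (D.c m))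
        \<le> util_I n Ginfo \<beta> \<alpha> \<pi> \<delta> \<mu> \<sigma> G i (infoset Gs Ginfo i (D.c m))"
    using opt[rule_format, OF GGs i_lt D.s_valid II] .
  then have "util n Ginfo \<beta> \<alpha> \<pi> \<delta> (\<sigma>(i := D.s)) i (D.c m) \<le> util n Ginfo \<beta> \<alpha> \<pi> \<delta> \<sigma> i (D.c m)"
    using D.belief_util[OF cons] by simp
  moreover have "util n Ginfo \<beta> \<alpha> \<pi> \<delta> \<sigma> i (D.c m) < util n Ginfo \<beta> \<alpha> \<pi> \<delta> (\<sigma>(i := D.s)) i (D.c m)"
    by (rule D.util_gain[OF assms(2,3) r0]) (use small in \<open>simp add: C_def\<close>)
  ultimately show False by simp
qed

end
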